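(* Let $n$ be a positive integer, $c\ge2$ an integer, and $b_0\ge b_1\ge\dots\ge b_n\ge0$ as defined in the context. Let $$L'=b_0+\sum_{i=0}^{n-1} b_{\min\{i+c+1,n\}}2^i,\qquad U'=b_0+\sum_{i=0}^{n-1} b_{\max\{i+1-c,0\}}2^i.$$ Then $U'\le 2^{2c}L'$.
   Context: Given $w:\{0,1\}^n\to\mathbb{R}_{\ge0}$, fix an ordering $\sigma_1,\dots,\sigma_{2^n}$ of $\{0,1\}^n$ with $w(\sigma_j)\ge w(\sigma_{j+1})$ for $1\le j<2^n$, and set $b_i=w(\sigma_{2^i})$ for $i=0,\dots,n$. *)

theory Defs
  imports Complex_Main
begin

text \<open>Elements of {0,1}^n are represented as boolean lists of length n.
  An ordering sigma_1,...,sigma_{2^n} is a function sigma on {1..2^n} that is a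
  bijection onto {0,1}^n.  b_i = w(sigma_{2^i}).\<close>

definition bval :: "(bool list \<Rightarrow> real) \<Rightarrow> (nat \<Rightarrow> bool list) \<Rightarrow> nat \<Rightarrow> real" where
  "bval w \<sigma> i = w (\<sigma> (2 ^ i))"

end

theory Submission
  imports Defs
begin

lemma split_sum_aux:
  fixes f :: "nat \<Rightarrow> real"
  shows "m \<le> n \<Longrightarrow> (\<Sum>i<n. f i) = (\<Sum>i<m. f i) + (\<Sum>i<n-m. f (i+m))"
proof (induction n)
  case 0 then show ?case by simp
next
  case (Suc n)
  show ?case
  proof (cases "m = Suc n")
    case True then show ?thesis by simp
  next
    case False
    then have "m \<le> n" using Suc.prems by simp
    moreover have "Suc n - m = Suc (n - m)" using \<open>m \<le> n\<close> by simp
    ultimately show ?thesis using Suc.IH by (simp add: add.assoc)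
  qed
qed

lemma mono_chain:
  fixes g :: "nat \<Rightarrow> real"
  assumes "\<forall>j. 1 \<le> j \<and> j < N \<longrightarrow> g j \<ge> g (Suc j)"
  shows "1 \<le> a \<Longrightarrow> a \<le> b \<Longrightarrow> b \<le> N \<Longrightarrow> g b \<le> g a"
proof (induction b)
  case 0 then show ?case by simp
next
  case (Suc b)
  show ?case
  proof (cases "a = Suc b")
    case True then show ?thesis by simp
  next
    case False
    then have "a \<le> b" using Suc.prems by simp
    then have "g b \<le> g a" using Suc by simp
    moreover have "g (Suc b) \<le> g b" using assms Suc.prems \<open>a \<le> b\<close> by auto
    ultimately show ?thesis by simp
  qed
qed

theorem lemma2:
  fixes n c :: nat and w :: "bool list \<Rightarrow> real" and \<sigma> :: "nat \<Rightarrow> bool list"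
  assumes "n \<ge> 1" and "c \<ge> 2"
    and "\<forall>x. length x = n \<longrightarrow> w x \<ge> 0"
    and "bij_betw \<sigma> {1..2^n} {x. length x = n}"
    and "\<forall>j. 1 \<le> j \<and> j < 2^n \<longrightarrow> w (\<sigma> j) \<ge> w (\<sigma> (Suc j))"
  shows "bval w \<sigma> 0 + (\<Sum>i<n. bval w \<sigma> (max (i + 1 - c) 0) * 2 ^ i)
         \<le> 2 ^ (2 * c) * (bval w \<sigma> 0 + (\<Sum>i<n. bval w \<sigma> (min (i + c + 1) n) * 2 ^ i))"
proof -
  define B where "B = bval w \<sigma>"
  have nn: "B i \<ge> 0" if "i \<le> n" for i
  proof -
    have "(2::nat)^i \<le> 2^n" using that by (simp add: power_increasing)
    moreover have "(1::nat) \<le> 2^i" by simp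
    ultimately have "\<sigma> (2^i) \<in> {x. length x = n}"
      using bij_betw_apply[OF assms(4)] by auto
    then show ?thesis using assms(3) by (simp add: B_def bval_def)
  qed
  have mo: "B k \<le> B j" if "j \<le> k" "k \<le> n" for j k
  proof -
    have "(2::nat)^k \<le> 2^n" using that by (simp add: power_increasing)
    moreover have "(2::nat)^j \<le> 2^k" using that by (simp add: power_increasing)
    ultimately show ?thesis unfolding B_def bval_def
      using mono_chain[of "2^n" "\<lambda>j. w (\<sigma> j)", OF assms(5), of "2^j" "2^k"] by simp
  qed
  define m where "m = min (2*c) n"
  define U where "U = (\<lambda>i. B (i + 1 - c) * 2 ^ i)"
  define L where "L = (\<lambda>i. B (min (i + c + 1) n) * (2::real) ^ i)"
  have Lnn: "L i \<ge> 0" for i unfolding L_def using nn by simp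
  have s: "(\<Sum>i<n. U i) = (\<Sum>i<m. U i) + (\<Sum>i<n-m. U (i+m))"
    using split_sum_aux[of m n U] by (simp add: m_def)
  have p1: "(\<Sum>i<m. U i) \<le> (\<Sum>i<m. B 0 * 2^i)"
  proof (rule sum_mono)
    fix i assume "i \<in> {..<m}"
    then have "i < n" by (simp add: m_def)
    then show "U i \<le> B 0 * 2^i" unfolding U_def using mo[of 0 "i+1-c"]
      by (intro mult_right_mono) auto
  qed
  have g: "(\<Sum>i<m. (2::real)^i) = 2^m - 1"
    by (induction m) simp_all
  have "(2::real)^m \<le> 2^(2*c)" by (simp add: m_def power_increasing)
  have b0: "B 0 \<ge> 0" using nn by simp
  have p1': "B 0 + (\<Sum>i<m. U i) \<le> 2^(2*c) * B 0"
  proof -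
    have "(\<Sum>i<m. B 0 * 2^i) = B 0 * (2^m - 1)" by (simp add: sum_distrib_left[symmetric] g)
    then have "B 0 + (\<Sum>i<m. U i) \<le> B 0 * 2^m" using p1 by (simp add: algebra_simps)
    also have "\<dots> \<le> B 0 * 2^(2*c)" using b0 \<open>(2::real)^m \<le> 2^(2*c)\<close> by (rule mult_left_mono[rotated])
    finally show ?thesis by (simp add: mult.commute)
  qed
  have p2: "(\<Sum>i<n-m. U (i+m)) \<le> 2^(2*c) * (\<Sum>i<n. L i)"
  proof (cases "m = n")
    case True then show ?thesis using Lnn by (simp add: sum_nonneg)
  next
    case False
    then have mc: "m = 2*c" by (simp add: m_def min_def split: if_splits)
    have "(\<Sum>i<n-m. U (i+m)) = (\<Sum>i<n-m. 2^(2*c) * L i)"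
    proof (rule sum.cong)
      fix i assume "i \<in> {..<n-m}"
      then have "i + m < n" by simp
      then have "min (i + c + 1) n = i + m + 1 - c" using mc \<open>c \<ge> 2\<close> by simp
      then show "U (i+m) = 2^(2*c) * L i" unfolding U_def L_def mc
        by (simp add: power_add algebra_simps)
    qed simp
    also have "\<dots> = 2^(2*c) * (\<Sum>i<n-m. L i)" by (simp add: sum_distrib_left)
    also have "\<dots> \<le> 2^(2*c) * (\<Sum>i<n. L i)"
      by (intro mult_left_mono sum_mono2) (auto simp: Lnn)
    finally show ?thesis .
  qed
  have "B 0 + (\<Sum>i<n. U i) \<le> 2^(2*c) * (B 0 + (\<Sum>i<n. L i))"
    using s p1' p2 by (simp add: algebra_simps)
  then show ?thesis unfolding B_def U_def L_def by simp
qed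

end
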